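(* Let $M\ge1$, $\boldsymbol{y},\boldsymbol{g}\in\mathbb{C}^{4M+1}$ and $\lambda_w>0$. Then $(\hat{\boldsymbol{x}}_1,\hat{\boldsymbol{x}}_2)$ is a minimizer of $$\min_{\boldsymbol{x}_1,\boldsymbol{x}_2}\ \tfrac12\|\boldsymbol{y}-\boldsymbol{x}_1-\boldsymbol{g}\odot\boldsymbol{x}_2\|_2^2+\lambda_w(\|\boldsymbol{x}_1\|_{\mathcal{A}}+\|\boldsymbol{x}_2\|_{\mathcal{A}})$$ if and only if, with $\boldsymbol{r}=\boldsymbol{y}-(\hat{\boldsymbol{x}}_1+\boldsymbol{g}\odot\hat{\boldsymbol{x}}_2)$, $$\|\boldsymbol{r}\|_{\mathcal{A}}^\star\le\lambda_w,\qquad \|\bar{\boldsymbol{g}}\odot\boldsymbol{r}\|_{\mathcal{A}}^\star\le\lambda_w,\qquad \langle\boldsymbol{r},\hat{\boldsymbol{x}}_1+\boldsymbol{g}\odot\hat{\boldsymbol{x}}_2\rangle_{\mathbb{R}}=\lambda_w\|\hat{\boldsymbol{x}}_1\|_{\mathcal{A}}+\lambda_w\|\hat{\boldsymbol{x}}_2\|_{\mathcal{A}}.$$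
   Context: $\boldsymbol{c}(\tau)\in\mathbb{C}^{4M+1}$ has entries $e^{-j2\pi n\tau}$, $n=-2M,\dots,2M$ ($j=\sqrt{-1}$); $\odot$ is entrywise product; $\|\boldsymbol{x}\|_{\mathcal{A}}=\inf\{\sum_k|a_k|:\boldsymbol{x}=\sum_ka_k\boldsymbol{c}(\tau_k),a_k\in\mathbb{C},\tau_k\in[0,1)\}$. Inner products: $\langle\boldsymbol{p},\boldsymbol{x}\rangle=\boldsymbol{x}^H\boldsymbol{p}$ and $\langle\boldsymbol{p},\boldsymbol{x}\rangle_{\mathbb{R}}=\mathrm{Re}(\boldsymbol{x}^H\boldsymbol{p})$. Dual norm: $\|\boldsymbol{p}\|_{\mathcal{A}}^\star=\sup_{\|\boldsymbol{x}\|_{\mathcal{A}}\le1}\langle\boldsymbol{p},\boldsymbol{x}\rangle_{\mathbb{R}}=\sup_{\tau\in[0,1)}|\sum_{n=-2M}^{2M}p_ne^{j2\pi n\tau}|$. *)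

theory Defs
  imports "HOL-Analysis.Analysis"
begin

text \<open>Vectors in C^(4M+1) are represented as functions int => complex indexed by
  n = -2M..2M, vanishing outside this index range.\<close>

definition idx :: "nat \<Rightarrow> int set" where
  "idx M = {-2 * int M .. 2 * int M}"

definition cvec :: "nat \<Rightarrow> (int \<Rightarrow> complex) set" where
  "cvec M = {x. \<forall>n. n \<notin> idx M \<longrightarrow> x n = 0}"

definition atom :: "nat \<Rightarrow> real \<Rightarrow> int \<Rightarrow> complex" where
  "atom M \<tau> n = (if n \<in> idx M then exp (- \<i> * complex_of_real (2 * pi * of_int n * \<tau>)) else 0)"

definition hadamard :: "(int \<Rightarrow> complex) \<Rightarrow> (int \<Rightarrow> complex) \<Rightarrow> int \<Rightarrow> complex" where
  "hadamard u v = (\<lambda>n. u n * v n)"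

definition atomic_norm :: "nat \<Rightarrow> (int \<Rightarrow> complex) \<Rightarrow> real" where
  "atomic_norm M x = Inf {(\<Sum>k<K. norm (a k)) | (K::nat) a \<tau>.
      (\<forall>k<K. \<tau> k \<in> {0..<1}) \<and> (\<forall>n\<in>idx M. x n = (\<Sum>k<K. a k * atom M (\<tau> k) n))}"

definition rinner :: "nat \<Rightarrow> (int \<Rightarrow> complex) \<Rightarrow> (int \<Rightarrow> complex) \<Rightarrow> real" where
  "rinner M p x = Re (\<Sum>n\<in>idx M. cnj (x n) * p n)"

definition dual_atomic_norm :: "nat \<Rightarrow> (int \<Rightarrow> complex) \<Rightarrow> real" where
  "dual_atomic_norm M p = Sup {rinner M p x | x. x \<in> cvec M \<and> atomic_norm M x \<le> 1}"

definition objective :: "nat \<Rightarrow> real \<Rightarrow> (int \<Rightarrow> complex) \<Rightarrow> (int \<Rightarrow> complex)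
    \<Rightarrow> (int \<Rightarrow> complex) \<Rightarrow> (int \<Rightarrow> complex) \<Rightarrow> real" where
  "objective M lam y g x1 x2 =
     1/2 * (\<Sum>n\<in>idx M. (norm (y n - x1 n - g n * x2 n))\<^sup>2)
     + lam * (atomic_norm M x1 + atomic_norm M x2)"

end

theory Submission
  imports Defs
begin


lemma rou:
  fixes d :: int and N :: nat
  assumes "N > 0" "\<bar>d\<bar> < int N"
  shows "(\<Sum>k<N. exp (- \<i> * complex_of_real (2 * pi * of_int d * real k / real N)))
         = (if d = 0 then of_nat N else 0)"
proof (cases "d = 0")
  case True then show ?thesis by simp
next
  case False
  define w where "w = exp (- \<i> * complex_of_real (2 * pi * of_int d / real N))"
  have e: "exp (- \<i> * complex_of_real (2 * pi * of_int d * real k / real N)) = w ^ k" for k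
  proof -
    have "- \<i> * complex_of_real (2 * pi * of_int d * real k / real N)
        = of_nat k * (- \<i> * complex_of_real (2 * pi * of_int d / real N))"
      by (simp add: field_simps)
    then show ?thesis unfolding w_def exp_of_nat_mult[symmetric] by metis
  qed
  have wN: "w ^ N = 1"
  proof -
    have "w ^ N = exp (of_nat N * (- \<i> * complex_of_real (2 * pi * of_int d / real N)))"
      unfolding w_def by (simp only: exp_of_nat_mult)
    also have "of_nat N * (- \<i> * complex_of_real (2 * pi * of_int d / real N))
        = - \<i> * complex_of_real (2 * pi * of_int d)"
      using assms by (simp add: field_simps)
    also have "exp \<dots> = 1"
      by (subst exp_eq_1) (auto intro!: exI[of _ "-d"])
    finally show ?thesis .
  qed
  have w1: "w \<noteq> 1"
  proof
    assume "w = 1"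
    then obtain n :: int where n: "- (2 * pi * of_int d / real N) = of_int (2 * n) * pi"
      unfolding w_def exp_eq_1 by auto
    then have "- (pi * of_int d) = pi * (of_int n * real N)"
      using assms by (simp add: field_simps)
    then have "- (of_int d) = of_int n * real N" by (metis minus_mult_right mult_left_cancel pi_neq_zero)
    then have "- d = n * int N" by (metis of_int_eq_iff of_int_minus of_int_mult of_int_of_nat_eq)
    then have a: "\<bar>d\<bar> = \<bar>n\<bar> * int N" by (metis abs_minus_cancel abs_mult abs_of_nat)
    have "n \<noteq> 0" using \<open>- d = n * int N\<close> False by auto
    then have "\<bar>n\<bar> * int N \<ge> 1 * int N" by (intro mult_right_mono) auto
    then show False using a assms by simp
  qed
  have "(\<Sum>k<N. exp (- \<i> * complex_of_real (2 * pi * of_int d * real k / real N))) = (\<Sum>k<N. w ^ k)"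
    by (rule sum.cong[OF refl]) (rule e)
  also have "\<dots> = 0" using w1 wN by (simp add: sum_gp_strict)
  finally show ?thesis using False by simp
qed

lemma atom_prod:
  assumes "n \<in> idx M" "m \<in> idx M"
  shows "cnj (atom M t m) * atom M t n = exp (- \<i> * complex_of_real (2 * pi * of_int (n - m) * t))"
proof -
  have "cnj (atom M t m) * atom M t n
      = exp (cnj (- \<i> * complex_of_real (2 * pi * of_int m * t))) * exp (- \<i> * complex_of_real (2 * pi * of_int n * t))"
    using assms by (simp only: atom_def exp_cnj if_True)
  also have "\<dots> = exp (cnj (- \<i> * complex_of_real (2 * pi * of_int m * t)) + (- \<i> * complex_of_real (2 * pi * of_int n * t)))"
    by (rule mult_exp_exp)
  also have "cnj (- \<i> * complex_of_real (2 * pi * of_int m * t)) + (- \<i> * complex_of_real (2 * pi * of_int n * t))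
      = - \<i> * complex_of_real (2 * pi * of_int (n - m) * t)"
    by (simp add: algebra_simps)
  finally show ?thesis .
qed

lemma spanning:
  "\<exists>(K::nat) a \<tau>. (\<forall>k<K. \<tau> k \<in> {0..<1}) \<and> (\<forall>n\<in>idx M. x n = (\<Sum>k<K. a k * atom M (\<tau> k) n))"
proof -
  define N where "N = 4 * M + 1"
  define \<tau> where "\<tau> k = real k / real N" for k
  define a where "a k = (1 / of_nat N) * (\<Sum>m\<in>idx M. x m * cnj (atom M (\<tau> k) m))" for k
  have Np: "N > 0" unfolding N_def by simp
  have t: "\<forall>k<N. \<tau> k \<in> {0..<1}" unfolding \<tau>_def using Np by auto
  have fin: "finite (idx M)" unfolding idx_def by simp
  have "x n = (\<Sum>k<N. a k * atom M (\<tau> k) n)" if n: "n \<in> idx M" for n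
  proof -
    have "(\<Sum>k<N. a k * atom M (\<tau> k) n)
        = (1 / of_nat N) * (\<Sum>k<N. \<Sum>m\<in>idx M. x m * (cnj (atom M (\<tau> k) m) * atom M (\<tau> k) n))"
      unfolding a_def by (simp add: sum_distrib_left sum_distrib_right mult.assoc)
    also have "\<dots> = (1 / of_nat N) * (\<Sum>m\<in>idx M. x m * (\<Sum>k<N. cnj (atom M (\<tau> k) m) * atom M (\<tau> k) n))"
      by (simp add: sum.swap[of _ "{..<N}"] sum_distrib_left)
    also have "\<dots> = (1 / of_nat N) * (\<Sum>m\<in>idx M. x m * (if n - m = 0 then of_nat N else 0))"
    proof -
      have "(\<Sum>k<N. cnj (atom M (\<tau> k) m) * atom M (\<tau> k) n) = (if n - m = 0 then of_nat N else 0)"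
        if m: "m \<in> idx M" for m
      proof -
        have "\<bar>n - m\<bar> < int N" using n m unfolding idx_def N_def by auto
        then have r: "(\<Sum>k<N. exp (- \<i> * complex_of_real (2 * pi * of_int (n - m) * real k / real N)))
           = (if n - m = 0 then of_nat N else 0)" using rou Np by blast
        show ?thesis
          unfolding r[symmetric] using n m by (intro sum.cong refl) (simp add: atom_prod \<tau>_def)
      qed
      then show ?thesis by (intro arg_cong[where f="\<lambda>u. _ * u"] sum.cong refl) simp
    qed
    also have "(\<lambda>m. x m * (if n - m = 0 then of_nat N else 0)) = (\<lambda>m. if n = m then x m * of_nat N else 0)"
      by auto
    also have "(1 / of_nat N) * (\<Sum>m\<in>idx M. if n = m then x m * of_nat N else 0) = x n"
      using n fin Np by (simp add: sum.delta)
    finally show ?thesis by simp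
  qed
  then have h: "\<forall>n\<in>idx M. x n = (\<Sum>k<N. a k * atom M (\<tau> k) n)" by blast
  show ?thesis using t h by blast
qed



definition decs :: "nat \<Rightarrow> (int \<Rightarrow> complex) \<Rightarrow> real set" where
  "decs M x = {(\<Sum>k<K. norm (a k)) | (K::nat) a \<tau>.
      (\<forall>k<K. \<tau> k \<in> {0..<1}) \<and> (\<forall>n\<in>idx M. x n = (\<Sum>k<K. a k * atom M (\<tau> k) n))}"

lemma an_eq: "atomic_norm M x = Inf (decs M x)"
  by (simp add: atomic_norm_def decs_def)

lemma decs_ne: "decs M x \<noteq> {}"
  using spanning[of M x] unfolding decs_def by blast

lemma decs_nonneg: "s \<in> decs M x \<Longrightarrow> 0 \<le> s"
  unfolding decs_def by (auto intro: sum_nonneg)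

lemma decs_bdd: "bdd_below (decs M x)"
  using decs_nonneg by (auto simp: bdd_below_def)

lemma an_le: "s \<in> decs M x \<Longrightarrow> atomic_norm M x \<le> s"
  unfolding an_eq using decs_bdd by (rule cInf_lower[rotated])

lemma an_ge: "(\<And>s. s \<in> decs M x \<Longrightarrow> c \<le> s) \<Longrightarrow> c \<le> atomic_norm M x"
  unfolding an_eq using decs_ne by (rule cInf_greatest)

lemma an_nonneg: "0 \<le> atomic_norm M x"
  by (rule an_ge) (rule decs_nonneg)

lemma sum_split_nat: "(\<Sum>k<K1+K2. f k) = (\<Sum>k<K1. f k) + (\<Sum>k<K2. f (K1 + k))"
  for f :: "nat \<Rightarrow> 'a::comm_monoid_add"
  by (induction K2) (simp_all add: add.assoc)

lemma decs_add:
  assumes "s \<in> decs M x" "t \<in> decs M z"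
  shows "s + t \<in> decs M (\<lambda>n. x n + z n)"
proof -
  obtain K1 :: nat and a1 t1 where 1: "s = (\<Sum>k<K1. norm (a1 k))" "\<forall>k<K1. t1 k \<in> {0..<1}"
    "\<forall>n\<in>idx M. x n = (\<Sum>k<K1. a1 k * atom M (t1 k) n)"
    using assms(1) unfolding decs_def by blast
  obtain K2 :: nat and a2 t2 where 2: "t = (\<Sum>k<K2. norm (a2 k))" "\<forall>k<K2. t2 k \<in> {0..<1}"
    "\<forall>n\<in>idx M. z n = (\<Sum>k<K2. a2 k * atom M (t2 k) n)"
    using assms(2) unfolding decs_def by blast
  define a where "a k = (if k < K1 then a1 k else a2 (k - K1))" for k
  define tt where "tt k = (if k < K1 then t1 k else t2 (k - K1))" for k
  have s: "(\<Sum>k<K1+K2. f (a k) (tt k)) = (\<Sum>k<K1. f (a1 k) (t1 k)) + (\<Sum>k<K2. f (a2 k) (t2 k))"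
    for f :: "complex \<Rightarrow> real \<Rightarrow> 'b::comm_monoid_add"
    unfolding sum_split_nat by (simp add: a_def tt_def)
  have "\<forall>k<K1+K2. tt k \<in> {0..<1}" using 1 2 unfolding tt_def by auto
  moreover have "s + t = (\<Sum>k<K1+K2. norm (a k))"
    using s[of "\<lambda>u v. norm u"] 1 2 by simp
  moreover have "\<forall>n\<in>idx M. x n + z n = (\<Sum>k<K1+K2. a k * atom M (tt k) n)"
    using s[of "\<lambda>u v. u * atom M v _"] 1 2 by simp
  ultimately show ?thesis unfolding decs_def by blast
qed

lemma decs_scale:
  assumes "s \<in> decs M x"
  shows "norm c * s \<in> decs M (\<lambda>n. c * x n)"
proof -
  obtain K :: nat and a t where 1: "s = (\<Sum>k<K. norm (a k))" "\<forall>k<K. t k \<in> {0..<1}"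
    "\<forall>n\<in>idx M. x n = (\<Sum>k<K. a k * atom M (t k) n)"
    using assms(1) unfolding decs_def by blast
  have h1: "norm c * s = (\<Sum>k<K. norm (c * a k))" using 1 by (simp add: sum_distrib_left norm_mult)
  have h2: "\<forall>n\<in>idx M. c * x n = (\<Sum>k<K. (c * a k) * atom M (t k) n)"
    using 1 by (simp add: sum_distrib_left mult.assoc)
  show ?thesis unfolding decs_def
    apply (rule CollectI)
    apply (rule exI[where x=K], rule exI[where x="\<lambda>k. c * a k"], rule exI[where x=t])
    using h1 h2 1 by simp
qed

lemma norm_atom_le: "norm (atom M t n) \<le> 1"
  by (simp add: atom_def)

lemma decs_coord:
  assumes "s \<in> decs M x" "n \<in> idx M"
  shows "norm (x n) \<le> s"
proof -
  obtain K :: nat and a t where 1: "s = (\<Sum>k<K. norm (a k))"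
    "\<forall>n\<in>idx M. x n = (\<Sum>k<K. a k * atom M (t k) n)"
    using assms(1) unfolding decs_def by blast
  have "norm (x n) \<le> (\<Sum>k<K. norm (a k * atom M (t k) n))"
    using 1 assms(2) by (simp add: norm_sum)
  also have "\<dots> \<le> (\<Sum>k<K. norm (a k))"
    by (intro sum_mono) (simp add: norm_mult mult_left_le norm_atom_le)
  finally show ?thesis using 1 by simp
qed

lemma zero_decs: "0 \<in> decs M (\<lambda>n. 0)"
  unfolding decs_def by (rule CollectI, rule exI[where x="0::nat"]) auto

lemma an_zero: "atomic_norm M (\<lambda>n. 0) = 0"
  using an_le[OF zero_decs[of M]] an_nonneg[of M "\<lambda>n. 0"] by simp

lemma an_coord: "n \<in> idx M \<Longrightarrow> norm (x n) \<le> atomic_norm M x"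
  by (rule an_ge) (rule decs_coord)

lemma an_add: "atomic_norm M (\<lambda>n. x n + z n) \<le> atomic_norm M x + atomic_norm M z"
proof -
  have "atomic_norm M (\<lambda>n. x n + z n) - t \<le> atomic_norm M x" if t: "t \<in> decs M z" for t
  proof -
    have "atomic_norm M (\<lambda>n. x n + z n) - t \<le> s" if "s \<in> decs M x" for s
      using an_le[OF decs_add[OF that t]] by simp
    then show ?thesis by (rule an_ge)
  qed
  then have "atomic_norm M (\<lambda>n. x n + z n) - atomic_norm M x \<le> t" if "t \<in> decs M z" for t
    using that by force
  then have "atomic_norm M (\<lambda>n. x n + z n) - atomic_norm M x \<le> atomic_norm M z" by (rule an_ge)
  then show ?thesis by simp
qed

lemma an_scale_le: "atomic_norm M (\<lambda>n. c * x n) \<le> norm c * atomic_norm M x"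
proof (cases "c = 0")
  case True then show ?thesis using an_zero[of M] an_nonneg[of M x] by simp
next
  case False
  have "atomic_norm M (\<lambda>n. c * x n) / norm c \<le> s" if "s \<in> decs M x" for s
    using an_le[OF decs_scale[OF that, of c]] False by (simp add: field_simps)
  then have "atomic_norm M (\<lambda>n. c * x n) / norm c \<le> atomic_norm M x" by (rule an_ge)
  then show ?thesis using False by (simp add: field_simps)
qed

lemma an_scale:
  assumes "t \<ge> 0"
  shows "atomic_norm M (\<lambda>n. complex_of_real t * x n) = t * atomic_norm M x"
proof (cases "t = 0")
  case True then show ?thesis using an_zero[of M] by simp
next
  case False
  then have tp: "t > 0" using assms by simp
  have 1: "atomic_norm M (\<lambda>n. complex_of_real t * x n) \<le> t * atomic_norm M x"
    using an_scale_le[of M "complex_of_real t" x] assms by simp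
  have "atomic_norm M (\<lambda>n. complex_of_real (1/t) * (complex_of_real t * x n))
      \<le> (1/t) * atomic_norm M (\<lambda>n. complex_of_real t * x n)"
    using an_scale_le[of M "complex_of_real (1/t)" "\<lambda>n. complex_of_real t * x n"] tp
    by (simp add: norm_divide)
  moreover have "(\<lambda>n. complex_of_real (1/t) * (complex_of_real t * x n)) = x"
    using tp by (auto simp: field_simps)
  ultimately have "atomic_norm M x \<le> (1/t) * atomic_norm M (\<lambda>n. complex_of_real t * x n)" by simp
  then have "t * atomic_norm M x \<le> atomic_norm M (\<lambda>n. complex_of_real t * x n)"
    using tp by (simp add: field_simps)
  then show ?thesis using 1 by simp
qed



lemma rinner_add: "rinner M p (\<lambda>n. a n + b n) = rinner M p a + rinner M p b"
  by (simp add: rinner_def sum.distrib algebra_simps)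

lemma rinner_diff: "rinner M p (\<lambda>n. a n - b n) = rinner M p a - rinner M p b"
  by (simp add: rinner_def sum_subtractf algebra_simps)

lemma rinner_scale: "rinner M p (\<lambda>n. complex_of_real t * a n) = t * rinner M p a"
  by (simp add: rinner_def sum_distrib_left mult.assoc flip: Re_complex_of_real)
    (simp add: rinner_def sum_distrib_left mult.assoc)

lemma rinner_had: "rinner M p (\<lambda>n. g n * z n) = rinner M (\<lambda>n. cnj (g n) * p n) z"
  by (simp add: rinner_def algebra_simps)

lemma rinner_zero: "rinner M p (\<lambda>n. 0) = 0"
  by (simp add: rinner_def)

lemma rinner_le: "rinner M p x \<le> (\<Sum>n\<in>idx M. norm (p n)) * atomic_norm M x"
proof -
  have "rinner M p x \<le> norm (\<Sum>n\<in>idx M. cnj (x n) * p n)"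
    unfolding rinner_def by (rule complex_Re_le_cmod)
  also have "\<dots> \<le> (\<Sum>n\<in>idx M. norm (cnj (x n) * p n))" by (rule norm_sum)
  also have "\<dots> \<le> (\<Sum>n\<in>idx M. norm (p n) * atomic_norm M x)"
  proof (intro sum_mono)
    fix n assume n: "n \<in> idx M"
    have "norm (cnj (x n) * p n) = norm (p n) * norm (x n)" by (simp add: norm_mult mult.commute)
    then show "norm (cnj (x n) * p n) \<le> norm (p n) * atomic_norm M x"
      using an_coord[OF n, of x] by (simp add: mult_left_mono)
  qed
  finally show ?thesis by (simp add: sum_distrib_right)
qed

lemma lim_le:
  fixes a b c :: real
  assumes "\<And>s. 0 < s \<Longrightarrow> s \<le> 1 \<Longrightarrow> a \<le> b + s * c"
  shows "a \<le> b"
proof (rule ccontr)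
  assume "\<not> a \<le> b"
  then have ab: "a > b" by simp
  show False
  proof (cases "c \<le> 0")
    case True then show ?thesis using assms[of 1] ab by simp
  next
    case False
    define s where "s = min 1 ((a - b) / (2 * c))"
    have sp: "0 < s" "s \<le> 1" using ab False unfolding s_def by auto
    have "s * c \<le> (a - b) / (2 * c) * c" using False unfolding s_def
      by (intro mult_right_mono) auto
    also have "\<dots> = (a - b) / 2" using False by simp
    finally show False using assms[OF sp] ab by simp
  qed
qed

lemma cvec_zero: "(\<lambda>n. 0) \<in> cvec M" by (simp add: cvec_def)

lemma dual_le_iff:
  assumes "lam \<ge> 0"
  shows "dual_atomic_norm M p \<le> lam \<longleftrightarrow> (\<forall>x\<in>cvec M. rinner M p x \<le> lam * atomic_norm M x)"
proof -
  define S where "S = {rinner M p x | x. x \<in> cvec M \<and> atomic_norm M x \<le> 1}"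
  have D: "dual_atomic_norm M p = Sup S" unfolding S_def dual_atomic_norm_def by simp
  have ne: "S \<noteq> {}" unfolding S_def using cvec_zero an_zero by fastforce
  have bdd: "bdd_above S"
  proof (rule bdd_aboveI)
    fix s assume "s \<in> S"
    then obtain x where "s = rinner M p x" "atomic_norm M x \<le> 1" unfolding S_def by blast
    then show "s \<le> (\<Sum>n\<in>idx M. norm (p n))"
      using rinner_le[of M p x] by (smt (verit) mult_left_le norm_ge_zero sum_nonneg)
  qed
  show ?thesis
  proof
    assume le: "dual_atomic_norm M p \<le> lam"
    show "\<forall>x\<in>cvec M. rinner M p x \<le> lam * atomic_norm M x"
    proof
      fix x assume x: "x \<in> cvec M"
      have sc: "(\<lambda>n. complex_of_real t * x n) \<in> cvec M" for t
        using x by (simp add: cvec_def)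
      show "rinner M p x \<le> lam * atomic_norm M x"
      proof (cases "atomic_norm M x = 0")
        case True
        have "rinner M p x \<le> 0 + s * lam" if s: "0 < s" "s \<le> 1" for s
        proof -
          have "atomic_norm M (\<lambda>n. complex_of_real (1/s) * x n) = 0"
            using an_scale[of "1/s" M x] s True by simp
          then have "rinner M p (\<lambda>n. complex_of_real (1/s) * x n) \<in> S"
            unfolding S_def using sc by fastforce
          then have "rinner M p (\<lambda>n. complex_of_real (1/s) * x n) \<le> lam"
            using cSup_upper[OF _ bdd] le D by fastforce
          then have "(1/s) * rinner M p x \<le> lam" by (simp only: rinner_scale)
          then show ?thesis using s by (simp add: field_simps)
        qed
        then have "rinner M p x \<le> 0" by (rule lim_le)
        then show ?thesis using True by simp
      next
        case False
        then have np: "atomic_norm M x > 0" using an_nonneg[of M x] by simp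
        define t where "t = 1 / atomic_norm M x"
        have "atomic_norm M (\<lambda>n. complex_of_real t * x n) = 1"
          using an_scale[of t M x] np unfolding t_def by simp
        then have "rinner M p (\<lambda>n. complex_of_real t * x n) \<in> S"
          unfolding S_def using sc by fastforce
        then have "rinner M p (\<lambda>n. complex_of_real t * x n) \<le> lam"
          using cSup_upper[OF _ bdd] le D by fastforce
        then have "t * rinner M p x \<le> lam" by (simp only: rinner_scale)
        then have "rinner M p x / atomic_norm M x \<le> lam" by (simp add: t_def)
        then show ?thesis using np by (simp add: field_simps)
      qed
    qed
  next
    assume h: "\<forall>x\<in>cvec M. rinner M p x \<le> lam * atomic_norm M x"
    have "Sup S \<le> lam"
    proof (rule cSup_least[OF ne])
      fix s assume "s \<in> S"
      then obtain x where x: "s = rinner M p x" "x \<in> cvec M" "atomic_norm M x \<le> 1" unfolding S_def by blast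
      then have "s \<le> lam * atomic_norm M x" using h by simp
      also have "\<dots> \<le> lam * 1" using x assms by (intro mult_left_mono) auto
      finally show "s \<le> lam" by simp
    qed
    then show "dual_atomic_norm M p \<le> lam" using D by simp
  qed
qed

lemma pw: "(norm (r - d))\<^sup>2 = (norm r)\<^sup>2 - 2 * Re (cnj d * r) + (norm d)\<^sup>2"
  unfolding cmod_power2 by (simp add: power2_diff algebra_simps)

lemma obj_expand:
  assumes "\<forall>n. d n = (x1 n + g n * x2 n) - (u1 n + g n * u2 n)"
  shows "objective M lam y g x1 x2 =
    1/2 * (\<Sum>n\<in>idx M. (norm (y n - (u1 n + g n * u2 n)))\<^sup>2)
    - rinner M (\<lambda>n. y n - (u1 n + g n * u2 n)) d
    + 1/2 * (\<Sum>n\<in>idx M. (norm (d n))\<^sup>2)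
    + lam * (atomic_norm M x1 + atomic_norm M x2)"
proof -
  have e: "y n - x1 n - g n * x2 n = (y n - (u1 n + g n * u2 n)) - d n" for n
    using assms by (simp add: algebra_simps)
  have "(\<Sum>n\<in>idx M. (norm (y n - x1 n - g n * x2 n))\<^sup>2)
     = (\<Sum>n\<in>idx M. (norm (y n - (u1 n + g n * u2 n)))\<^sup>2 - 2 * Re (cnj (d n) * (y n - (u1 n + g n * u2 n))) + (norm (d n))\<^sup>2)"
    by (simp only: e pw)
  also have "\<dots> = (\<Sum>n\<in>idx M. (norm (y n - (u1 n + g n * u2 n)))\<^sup>2)
      - 2 * rinner M (\<lambda>n. y n - (u1 n + g n * u2 n)) d + (\<Sum>n\<in>idx M. (norm (d n))\<^sup>2)"
    by (simp add: rinner_def sum.distrib sum_subtractf sum_distrib_left)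
  finally show ?thesis unfolding objective_def by (simp add: algebra_simps)
qed

lemma sumsq_scale: "(\<Sum>n\<in>A. (norm (complex_of_real t * z n))\<^sup>2) = t\<^sup>2 * (\<Sum>n\<in>A. (norm (z n))\<^sup>2)"
  by (simp add: norm_mult power_mult_distrib sum_distrib_left)



theorem proposition7:
  fixes M :: nat and lam :: real and y g xh1 xh2 :: "int \<Rightarrow> complex"
  assumes "M \<ge> 1" and "lam > 0"
    and "y \<in> cvec M" and "g \<in> cvec M"
    and "xh1 \<in> cvec M" and "xh2 \<in> cvec M"
  shows "(\<forall>x1\<in>cvec M. \<forall>x2\<in>cvec M.
            objective M lam y g xh1 xh2 \<le> objective M lam y g x1 x2)
     \<longleftrightarrow>
     (let r = (\<lambda>n. y n - (xh1 n + hadamard g xh2 n)) in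
        dual_atomic_norm M r \<le> lam
      \<and> dual_atomic_norm M (hadamard (\<lambda>n. cnj (g n)) r) \<le> lam
      \<and> rinner M r (\<lambda>n. xh1 n + hadamard g xh2 n)
          = lam * atomic_norm M xh1 + lam * atomic_norm M xh2)"
proof -
  define r where "r = (\<lambda>n. y n - (xh1 n + g n * xh2 n))"
  define u where "u = (\<lambda>n. xh1 n + g n * xh2 n)"
  define Q where "Q z = (\<Sum>n\<in>idx M. (norm (z n))\<^sup>2)" for z :: "int \<Rightarrow> complex"
  define N1 where "N1 = atomic_norm M xh1"
  define N2 where "N2 = atomic_norm M xh2"
  have Qnn: "Q z \<ge> 0" for z unfolding Q_def by (intro sum_nonneg) simp
  have Qsc: "Q (\<lambda>n. complex_of_real t * z n) = t\<^sup>2 * Q z" for t z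
    unfolding Q_def by (rule sumsq_scale)
  have lamnn: "lam \<ge> 0" using assms by simp
  have h1: "hadamard g xh2 = (\<lambda>n. g n * xh2 n)" by (simp add: hadamard_def)
  have h2: "hadamard (\<lambda>n. cnj (g n)) r = (\<lambda>n. cnj (g n) * r n)" by (simp add: hadamard_def)
  have rhs: "(let r = (\<lambda>n. y n - (xh1 n + hadamard g xh2 n)) in
        dual_atomic_norm M r \<le> lam
      \<and> dual_atomic_norm M (hadamard (\<lambda>n. cnj (g n)) r) \<le> lam
      \<and> rinner M r (\<lambda>n. xh1 n + hadamard g xh2 n)
          = lam * atomic_norm M xh1 + lam * atomic_norm M xh2)
    \<longleftrightarrow> ((\<forall>z\<in>cvec M. rinner M r z \<le> lam * atomic_norm M z)
       \<and> (\<forall>z\<in>cvec M. rinner M r (\<lambda>n. g n * z n) \<le> lam * atomic_norm M z)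
       \<and> rinner M r u = lam * N1 + lam * N2)"
    unfolding Let_def h1 r_def[symmetric] h2 u_def[symmetric] N1_def N2_def
    by (simp add: dual_le_iff[OF lamnn] rinner_had)
  have F0: "objective M lam y g xh1 xh2 = 1/2 * Q r + lam * (N1 + N2)"
    using obj_expand[of "\<lambda>n. 0" xh1 g xh2 xh1 xh2 M lam y]
    by (simp add: rinner_zero Q_def r_def N1_def N2_def)
  have FX: "objective M lam y g x1 x2 = 1/2 * Q r - rinner M r d + 1/2 * Q d
       + lam * (atomic_norm M x1 + atomic_norm M x2)"
    if "\<forall>n. d n = (x1 n + g n * x2 n) - (xh1 n + g n * xh2 n)" for x1 x2 d
    using obj_expand[OF that, of M lam y] by (simp add: Q_def r_def)
  have cv: "x \<in> cvec M \<Longrightarrow> z \<in> cvec M \<Longrightarrow> (\<lambda>n. x n + complex_of_real t * z n) \<in> cvec M"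
    for x z t by (simp add: cvec_def)
  have cv2: "x \<in> cvec M \<Longrightarrow> (\<lambda>n. complex_of_real t * x n) \<in> cvec M"
    for x t by (simp add: cvec_def)
  have gz: "z \<in> cvec M \<Longrightarrow> (\<lambda>n. g n * z n) \<in> cvec M" for z by (simp add: cvec_def)
  show ?thesis unfolding rhs
  proof
    assume opt: "\<forall>x1\<in>cvec M. \<forall>x2\<in>cvec M. objective M lam y g xh1 xh2 \<le> objective M lam y g x1 x2"
    have A: "\<forall>z\<in>cvec M. rinner M r z \<le> lam * atomic_norm M z"
    proof
      fix z assume z: "z \<in> cvec M"
      have "rinner M r z \<le> lam * atomic_norm M z + s * (Q z / 2)" if s: "0 < s" "s \<le> 1" for s
      proof -
        define x1 where "x1 = (\<lambda>n. xh1 n + complex_of_real s * z n)"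
        have "objective M lam y g xh1 xh2 \<le> objective M lam y g x1 xh2"
          using opt cv[OF assms(5) z] assms(6) unfolding x1_def by blast
        also have "objective M lam y g x1 xh2 = 1/2 * Q r - s * rinner M r z + 1/2 * (s\<^sup>2 * Q z)
            + lam * (atomic_norm M x1 + N2)"
          using FX[of "\<lambda>n. complex_of_real s * z n" x1 xh2]
          by (simp add: x1_def algebra_simps rinner_scale Qsc N2_def)
        finally have e1: "objective M lam y g xh1 xh2 \<le> 1/2 * Q r - s * rinner M r z + 1/2 * (s\<^sup>2 * Q z) + lam * (atomic_norm M x1 + N2)" .
        have "atomic_norm M x1 \<le> N1 + s * atomic_norm M z"
          using an_add[of M xh1 "\<lambda>n. complex_of_real s * z n"] an_scale[of s M z] s
          unfolding x1_def N1_def by simp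
        then have e2: "lam * atomic_norm M x1 \<le> lam * N1 + lam * (s * atomic_norm M z)"
          using lamnn by (metis distrib_left mult_left_mono)
        have "s * (rinner M r z) \<le> s * (lam * atomic_norm M z + s * (Q z / 2))"
          using e1 e2 F0 by (simp add: algebra_simps power2_eq_square)
        then show ?thesis using s by simp
      qed
      then show "rinner M r z \<le> lam * atomic_norm M z" by (rule lim_le)
    qed
    have B: "\<forall>z\<in>cvec M. rinner M r (\<lambda>n. g n * z n) \<le> lam * atomic_norm M z"
    proof
      fix z assume z: "z \<in> cvec M"
      have "rinner M r (\<lambda>n. g n * z n) \<le> lam * atomic_norm M z + s * (Q (\<lambda>n. g n * z n) / 2)"
        if s: "0 < s" "s \<le> 1" for s
      proof -
        define x2 where "x2 = (\<lambda>n. xh2 n + complex_of_real s * z n)"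
        have "objective M lam y g xh1 xh2 \<le> objective M lam y g xh1 x2"
          using opt cv[OF assms(6) z] assms(5) unfolding x2_def by blast
        also have "objective M lam y g xh1 x2 = 1/2 * Q r - s * rinner M r (\<lambda>n. g n * z n)
            + 1/2 * (s\<^sup>2 * Q (\<lambda>n. g n * z n))
            + lam * (N1 + atomic_norm M x2)"
          using FX[of "\<lambda>n. complex_of_real s * (g n * z n)" xh1 x2]
          by (simp add: x2_def algebra_simps rinner_scale Qsc N1_def)
        finally have e1: "objective M lam y g xh1 xh2 \<le> 1/2 * Q r - s * rinner M r (\<lambda>n. g n * z n) + 1/2 * (s\<^sup>2 * Q (\<lambda>n. g n * z n)) + lam * (N1 + atomic_norm M x2)" .
        have "atomic_norm M x2 \<le> N2 + s * atomic_norm M z"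
          using an_add[of M xh2 "\<lambda>n. complex_of_real s * z n"] an_scale[of s M z] s
          unfolding x2_def N2_def by simp
        then have e2: "lam * atomic_norm M x2 \<le> lam * N2 + lam * (s * atomic_norm M z)"
          using lamnn by (metis distrib_left mult_left_mono)
        have "s * (rinner M r (\<lambda>n. g n * z n)) \<le> s * (lam * atomic_norm M z + s * (Q (\<lambda>n. g n * z n) / 2))"
          using e1 e2 F0 by (simp add: algebra_simps power2_eq_square)
        then show ?thesis using s by simp
      qed
      then show "rinner M r (\<lambda>n. g n * z n) \<le> lam * atomic_norm M z" by (rule lim_le)
    qed
    have up: "rinner M r u \<le> lam * N1 + lam * N2"
      using A[rule_format, OF assms(5)] B[rule_format, OF assms(6)]
      unfolding u_def N1_def N2_def by (simp add: rinner_add)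
    have "lam * (N1 + N2) \<le> rinner M r u + s * (Q u / 2)" if s: "0 < s" "s \<le> 1" for s
    proof -
      define x1 where "x1 = (\<lambda>n. complex_of_real (1 - s) * xh1 n)"
      define x2 where "x2 = (\<lambda>n. complex_of_real (1 - s) * xh2 n)"
      have "objective M lam y g xh1 xh2 \<le> objective M lam y g x1 x2"
        using opt cv2[OF assms(5)] cv2[OF assms(6)] unfolding x1_def x2_def by blast
      also have "objective M lam y g x1 x2 = 1/2 * Q r - rinner M r (\<lambda>n. complex_of_real (- s) * u n)
            + 1/2 * Q (\<lambda>n. complex_of_real (- s) * u n) + lam * (atomic_norm M x1 + atomic_norm M x2)"
        by (rule FX) (simp add: x1_def x2_def u_def algebra_simps)
      also have "\<dots> = 1/2 * Q r - (- s) * rinner M r u + 1/2 * ((- s)\<^sup>2 * Q u)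
            + lam * ((1 - s) * N1 + (1 - s) * N2)"
        using s an_scale[of "1 - s" M xh1] an_scale[of "1 - s" M xh2]
        by (simp only: rinner_scale Qsc x1_def x2_def N1_def N2_def)
      finally have "0 \<le> s * (rinner M r u + s * (Q u / 2) - lam * (N1 + N2))"
        using F0 by (simp add: algebra_simps power2_eq_square)
      then show ?thesis using s by (simp add: zero_le_mult_iff)
    qed
    then have "lam * (N1 + N2) \<le> rinner M r u" by (rule lim_le)
    then show "(\<forall>z\<in>cvec M. rinner M r z \<le> lam * atomic_norm M z)
       \<and> (\<forall>z\<in>cvec M. rinner M r (\<lambda>n. g n * z n) \<le> lam * atomic_norm M z)
       \<and> rinner M r u = lam * N1 + lam * N2" using A B up by (simp add: algebra_simps)
  next
    assume "(\<forall>z\<in>cvec M. rinner M r z \<le> lam * atomic_norm M z)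
       \<and> (\<forall>z\<in>cvec M. rinner M r (\<lambda>n. g n * z n) \<le> lam * atomic_norm M z)
       \<and> rinner M r u = lam * N1 + lam * N2"
    then have A: "\<And>z. z \<in> cvec M \<Longrightarrow> rinner M r z \<le> lam * atomic_norm M z"
      and B: "\<And>z. z \<in> cvec M \<Longrightarrow> rinner M r (\<lambda>n. g n * z n) \<le> lam * atomic_norm M z"
      and C: "rinner M r u = lam * N1 + lam * N2" by auto
    show "\<forall>x1\<in>cvec M. \<forall>x2\<in>cvec M. objective M lam y g xh1 xh2 \<le> objective M lam y g x1 x2"
    proof (intro ballI)
      fix x1 x2 assume x1: "x1 \<in> cvec M" and x2: "x2 \<in> cvec M"
      define d where "d = (\<lambda>n. (x1 n + g n * x2 n) - u n)"
      have "rinner M r d = rinner M r x1 + rinner M r (\<lambda>n. g n * x2 n) - rinner M r u"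
        unfolding d_def by (simp add: rinner_diff rinner_add)
      then have "rinner M r d \<le> lam * atomic_norm M x1 + lam * atomic_norm M x2 - (lam * N1 + lam * N2)"
        using A[OF x1] B[OF x2] C by simp
      moreover have "objective M lam y g x1 x2 = 1/2 * Q r - rinner M r d + 1/2 * Q d
       + lam * (atomic_norm M x1 + atomic_norm M x2)"
        by (rule FX) (simp add: d_def u_def)
      ultimately show "objective M lam y g xh1 xh2 \<le> objective M lam y g x1 x2"
        using F0 Qnn[of d] by (simp add: algebra_simps)
    qed
  qed
qed


end
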